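(* Let $n\ge1$, let $S=\{a_1^{r_1},\dots,a_m^{r_m}\}$ be a multiset of elements of $[n]$ with $a_1<\dots<a_m$ and multiplicities $r_i\ge1$, and let $T\subseteq[n]$ be a set with $|T|=|S|=r_1+\dots+r_m$. For $1\le i\le m$ let $h(i)=|\{j\in T: j>a_i\}|-|\{j\in S: j>a_i\}|$ (elements of $S$ counted with multiplicity). Let $LP_n(S,T)$ be the set of linked partitions $\pi$ of $[n]$ with $\mathrm{left}(\pi)=S$ and $\mathrm{right}(\pi)=T$. Then $$\sum_{\pi\in LP_n(S,T)}x^{cr_2(\pi)}y^{ne_2(\pi)}=\sum_{\pi\in LP_n(S,T)}x^{ne_2(\pi)}y^{cr_2(\pi)}=\prod_{i=1}^m y^{r_ih(i)-r_i^2}\left.{h(i)\brack r_i}_q\right|_{q=x/y},$$ where ${a\brack b}_q=\frac{(q^a-1)(q^a-q)\cdots(q^a-q^{b-1})}{(q^b-1)(q^b-q)\cdots(q^b-q^{b-1})}$ is the $q$-binomial coefficient (equal to $0$ when $0\le a<b$).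
   Context: Two finite sets of integers $E,F$ are nearly disjoint if for every $i\in E\cap F$ either ($i=\min(E)$, $|E|>1$, $i\ne\min(F)$) or ($i=\min(F)$, $|F|>1$, $i\ne\min(E)$). A linked partition of $[n]$ is a set of nonempty subsets (blocks) of $[n]$ with union $[n]$, any two distinct blocks nearly disjoint. The arcs of a linked partition $\pi$ are the pairs $(i_1,j)$ where $i_1=\min(E)$ and $j\in E\setminus\{i_1\}$ for some block $E$ with $|E|\ge2$. $\mathrm{left}(\pi)$ is the multiset of left endpoints $i_1$ of arcs (one copy per arc) and $\mathrm{right}(\pi)$ the multiset (in fact a set) of right endpoints $j$ of arcs. Two arcs $(i_1,j_1),(i_2,j_2)$ form a 2-crossing if $i_1<i_2<j_1<j_2$ and a 2-nesting if $i_1<i_2<j_2<j_1$; $cr_2(\pi)$ and $ne_2(\pi)$ denote the numbers of 2-crossings and 2-nestings of $\pi$. *)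

theory Defs
  imports Complex_Main "HOL-Library.Multiset" "HOL-Computational_Algebra.Polynomial"
begin

definition nearly_disjoint :: "nat set \<Rightarrow> nat set \<Rightarrow> bool" where
  "nearly_disjoint E F \<longleftrightarrow>
     (\<forall>i \<in> E \<inter> F. (i = Min E \<and> card E > 1 \<and> i \<noteq> Min F) \<or>
                    (i = Min F \<and> card F > 1 \<and> i \<noteq> Min E))"

definition linked_partition :: "nat \<Rightarrow> nat set set \<Rightarrow> bool" where
  "linked_partition n \<pi> \<longleftrightarrow>
     (\<forall>E \<in> \<pi>. E \<noteq> {} \<and> E \<subseteq> {1..n}) \<and> \<Union>\<pi> = {1..n} \<and>
     (\<forall>E \<in> \<pi>. \<forall>F \<in> \<pi>. E \<noteq> F \<longrightarrow> nearly_disjoint E F)"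

definition arcs :: "nat set set \<Rightarrow> (nat \<times> nat) set" where
  "arcs \<pi> = {(Min E, j) | E j. E \<in> \<pi> \<and> card E \<ge> 2 \<and> j \<in> E - {Min E}}"

definition lefts :: "nat set set \<Rightarrow> nat multiset" where
  "lefts \<pi> = image_mset fst (mset_set (arcs \<pi>))"

definition rights :: "nat set set \<Rightarrow> nat multiset" where
  "rights \<pi> = image_mset snd (mset_set (arcs \<pi>))"

definition cr2 :: "nat set set \<Rightarrow> nat" where
  "cr2 \<pi> = card {(e, f). e \<in> arcs \<pi> \<and> f \<in> arcs \<pi> \<and>
                   fst e < fst f \<and> fst f < snd e \<and> snd e < snd f}"

definition ne2 :: "nat set set \<Rightarrow> nat" where
  "ne2 \<pi> = card {(e, f). e \<in> arcs \<pi> \<and> f \<in> arcs \<pi> \<and>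
                   fst e < fst f \<and> fst f < snd f \<and> snd f < snd e}"

definition LP :: "nat \<Rightarrow> nat multiset \<Rightarrow> nat set \<Rightarrow> nat set set set" where
  "LP n S T = {\<pi>. linked_partition n \<pi> \<and> lefts \<pi> = S \<and> rights \<pi> = mset_set T}"

text \<open>q-binomial coefficient as a polynomial in q: the quotient of the two products
  in the paper (the division is exact).\<close>
definition qbinom :: "nat \<Rightarrow> nat \<Rightarrow> 'a::field poly" where
  "qbinom a b = (\<Prod>k<b. monom 1 a - monom 1 k) div (\<Prod>k<b. monom 1 b - monom 1 k)"

end

theory Submission
  imports Defs
begin

fun Gp :: "nat \<Rightarrow> nat \<Rightarrow> real poly" where
  "Gp h 0 = 1"
| "Gp 0 (Suc r) = 0"
| "Gp (Suc h) (Suc r) = Gp h r + monom 1 (Suc r) * Gp h (Suc r)"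

definition fN :: "nat \<Rightarrow> nat \<Rightarrow> real poly" where
  "fN a r = (\<Prod>k<r. monom 1 a - monom 1 k)"

lemma Gp_zero: "h < r \<Longrightarrow> Gp h r = 0"
proof (induction h arbitrary: r)
  case 0 then show ?case by (cases r) auto
next
  case (Suc h) then show ?case by (cases r) auto
qed

lemma fN_Suc: "fN (Suc a) (Suc r) = (monom 1 (Suc a) - 1) * monom 1 r * fN a r"
proof -
  have "fN (Suc a) (Suc r) = (monom 1 (Suc a) - monom 1 0) * (\<Prod>k<r. monom 1 (Suc a) - monom 1 (Suc k))"
    unfolding fN_def by (rule prod.lessThan_Suc_shift)
  also have "(\<Prod>k<r. monom 1 (Suc a) - monom 1 (Suc k)) = (\<Prod>k<r. monom 1 1 * (monom 1 a - monom 1 k) :: real poly)" 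
  proof (rule prod.cong[OF refl])
    fix k
    have m: "monom (1::real) 1 * monom 1 j = monom 1 (Suc j)" for j
      using mult_monom[of "1::real" 1 1 j] by simp
    show "monom 1 (Suc a) - monom 1 (Suc k) = monom 1 1 * (monom 1 a - monom (1::real) k)"
      by (simp only: right_diff_distrib m)
  qed
  also have "\<dots> = monom 1 1 ^ r * fN a r"
    by (simp add: prod.distrib fN_def)
  also have "monom 1 1 ^ r = (monom 1 r :: real poly)"
    by (induction r) (auto simp: mult_monom)
  finally show ?thesis by (simp add: monom_0 one_pCons)
qed

lemma fN_Suc2: "fN a (Suc r) = fN a r * (monom 1 a - monom 1 r)"
  unfolding fN_def by simp

lemma fN_0: "fN 0 (Suc r) = 0"
  unfolding fN_def by (intro prod_zero bexI[of _ 0]) simp_all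

lemma fN_nz: "fN r r \<noteq> 0"
proof -
  have "monom 1 r - monom 1 k \<noteq> (0::real poly)" if "k < r" for k
  proof
    assume "monom 1 r - monom 1 k = (0::real poly)"
    then have "coeff (monom 1 r - monom 1 k) r = (0::real)" by simp
    then show False using that by (simp add: coeff_monom)
  qed
  then show ?thesis unfolding fN_def by (subst prod_zero_iff) auto
qed

lemma ring_id:
  fixes X A B F :: "'a::comm_ring_1"
  shows "(X * A - 1) * A * F + X * A * (F * (B - A)) = (X * B - 1) * A * F"
  by (simp add: algebra_simps)

lemma fN_Gp: "fN r r * Gp h r = fN h r"
proof (induction h arbitrary: r)
  case 0 then show ?case by (cases r) (simp add: fN_def, simp add: fN_0)
next
  case (Suc h)
  show ?case
  proof (cases r)
    case 0 then show ?thesis by (simp add: fN_def)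
  next
    case (Suc r')
    have A: "fN (Suc r') (Suc r') * Gp h r' = (monom 1 (Suc r') - 1) * monom 1 r' * fN h r'"
      using Suc.IH[of r'] by (simp only: fN_Suc mult.assoc)
    have B: "fN (Suc r') (Suc r') * Gp h (Suc r') = fN h r' * (monom 1 h - monom 1 r')"
      using Suc.IH[of "Suc r'"] by (simp only: fN_Suc2)
    have "fN r r * Gp (Suc h) r = fN (Suc r') (Suc r') * Gp h r' + monom 1 (Suc r') * (fN (Suc r') (Suc r') * Gp h (Suc r'))"
      using Suc by (simp add: algebra_simps)
    also have "\<dots> = (monom 1 (Suc r') - 1) * monom 1 r' * fN h r' + monom 1 (Suc r') * (fN h r' * (monom 1 h - monom 1 r'))"
      by (simp only: A B)
    also have "\<dots> = (monom 1 (Suc h) - 1) * monom 1 r' * fN h r'"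
    proof -
      have s1: "monom (1::real) (Suc k) = monom 1 1 * monom 1 k" for k
        using mult_monom[of "1::real" 1 1 k] by simp
      show ?thesis unfolding s1 by (rule ring_id)
    qed
    finally show ?thesis using Suc by (simp add: fN_Suc)
  qed
qed

lemma qbinom_Gp: "qbinom h r = Gp h r"
proof -
  have "qbinom h r = fN h r div fN r r" unfolding qbinom_def fN_def by simp
  also have "\<dots> = (fN r r * Gp h r) div fN r r" by (simp add: fN_Gp)
  also have "\<dots> = Gp h r" using fN_nz by simp
  finally show ?thesis .
qed

definition P :: "real \<Rightarrow> real \<Rightarrow> nat \<Rightarrow> nat \<Rightarrow> real" where
  "P x y h r = y ^ (r * (h - r)) * poly (Gp h r) (x / y)"

lemma P_0: "P x y h 0 = 1" by (simp add: P_def)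
lemma P_zero: "h < r \<Longrightarrow> P x y h r = 0" by (simp add: P_def Gp_zero)

lemma P_Suc: assumes "y \<noteq> 0"
  shows "P x y (Suc h) (Suc r) = y ^ (h - r) * P x y h r + x ^ Suc r * P x y h (Suc r)"
proof (cases "h < r")
  case True then show ?thesis by (simp add: P_zero)
next
  case False
  then obtain d where d: "h = r + d" by (metis le_add_diff_inverse not_less)
  show ?thesis
  proof (cases d)
    case 0 then show ?thesis using d by (simp add: P_def poly_monom Gp_zero)
  next
    case (Suc d')
    have e1: "Suc r * (Suc h - Suc r) = d + r * d" using d by simp
    have e2: "Suc r * (h - Suc r) = d' + r * d'" using d Suc by simp
    show ?thesis using d Suc assms
      by (simp add: P_def poly_monom e1 e2 power_add power_divide field_simps)
  qed
qed

definition Subs :: "nat set \<Rightarrow> nat \<Rightarrow> nat set set" where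
  "Subs V r = {R. R \<subseteq> V \<and> card R = r}"
definition cl :: "nat set \<Rightarrow> nat set \<Rightarrow> nat" where
  "cl V R = card {(v,j). v \<in> V - R \<and> j \<in> R \<and> v < j}"
definition cg :: "nat set \<Rightarrow> nat set \<Rightarrow> nat" where
  "cg V R = card {(v,j). v \<in> V - R \<and> j \<in> R \<and> j < v}"

lemma finite_Subs: "finite V \<Longrightarrow> finite (Subs V r)"
  unfolding Subs_def by (rule finite_subset[of _ "Pow V"]) auto

lemma Subs_empty: "Subs {} r = (if r = 0 then {{}} else {})"
  unfolding Subs_def by auto

lemma Subs_0: "finite V \<Longrightarrow> Subs V 0 = {{}}"
  unfolding Subs_def by (auto dest: finite_subset)

lemma Subs_split:
  assumes "finite V" "m \<in> V"
  shows "Subs V (Suc r) = insert m ` Subs (V - {m}) r \<union> Subs (V - {m}) (Suc r)"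
proof (intro equalityI subsetI)
  fix R assume R: "R \<in> Subs V (Suc r)"
  then have fR: "finite R" using assms finite_subset unfolding Subs_def by blast
  show "R \<in> insert m ` Subs (V - {m}) r \<union> Subs (V - {m}) (Suc r)"
  proof (cases "m \<in> R")
    case True
    then have "R = insert m (R - {m})" by auto
    moreover have "R - {m} \<in> Subs (V - {m}) r" using R True fR unfolding Subs_def by auto
    ultimately show ?thesis by blast
  next
    case False then show ?thesis using R unfolding Subs_def by auto
  qed
next
  fix R assume "R \<in> insert m ` Subs (V - {m}) r \<union> Subs (V - {m}) (Suc r)"
  then show "R \<in> Subs V (Suc r)"
  proof
    assume "R \<in> insert m ` Subs (V - {m}) r"
    then obtain R' where R': "R = insert m R'" "R' \<subseteq> V - {m}" "card R' = r" unfolding Subs_def by auto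
    then have "finite R'" using assms(1) finite_subset by blast
    moreover have "m \<notin> R'" using R' by auto
    ultimately show ?thesis using R' assms unfolding Subs_def by auto
  next
    assume "R \<in> Subs (V - {m}) (Suc r)" then show ?thesis unfolding Subs_def by auto
  qed
qed

lemma finite_pairs: "finite V \<Longrightarrow> finite {(v,j). v \<in> V - R \<and> j \<in> R \<and> Q v j \<and> R \<subseteq> V}"
  by (rule finite_subset[of _ "V \<times> V"]) auto

lemma loc_gen:
  fixes x y :: real and f :: "nat set \<Rightarrow> nat set \<Rightarrow> real"
  assumes "finite V" "y \<noteq> 0" "m \<in> V"
    and f1: "\<And>R'. R' \<subseteq> V - {m} \<Longrightarrow> card R' = r \<Longrightarrow> f V (insert m R') = y ^ (card V - Suc r) * f (V - {m}) R'"
    and f2: "\<And>R. R \<subseteq> V - {m} \<Longrightarrow> card R = Suc r \<Longrightarrow> f V R = x ^ Suc r * f (V - {m}) R"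
    and IH: "\<And>r. (\<Sum>R\<in>Subs (V - {m}) r. f (V - {m}) R) = P x y (card (V - {m})) r"
  shows "(\<Sum>R\<in>Subs V (Suc r). f V R) = P x y (card V) (Suc r)"
proof -
  have fin: "finite (V - {m})" using assms by auto
  have cV: "card V = Suc (card (V - {m}))" by (metis card_Suc_Diff1 assms(1,3))
  have "(\<Sum>R\<in>Subs V (Suc r). f V R) = (\<Sum>R\<in>insert m ` Subs (V - {m}) r. f V R) + (\<Sum>R\<in>Subs (V - {m}) (Suc r). f V R)"
    unfolding Subs_split[OF assms(1,3)]
    by (rule sum.union_disjoint) (rule finite_imageI, rule finite_Subs[OF fin], rule finite_Subs[OF fin], auto simp: Subs_def)
  also have "(\<Sum>R\<in>insert m ` Subs (V - {m}) r. f V R) = (\<Sum>R\<in>Subs (V - {m}) r. f V (insert m R))"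
    by (rule sum.reindex_cong[of "insert m"]) (auto simp: inj_on_def Subs_def)
  also have "\<dots> = (\<Sum>R\<in>Subs (V - {m}) r. y ^ (card V - Suc r) * f (V - {m}) R)"
    by (rule sum.cong) (auto simp: Subs_def f1)
  also have "(\<Sum>R\<in>Subs (V - {m}) (Suc r). f V R) = (\<Sum>R\<in>Subs (V - {m}) (Suc r). x ^ Suc r * f (V - {m}) R)"
    by (rule sum.cong) (auto simp: Subs_def f2)
  finally show ?thesis
    by (simp add: sum_distrib_left[symmetric] IH cV P_Suc assms(2))
qed

lemma fin_pairs: assumes "finite V" "R \<subseteq> V"
  shows "finite {(v,j). v \<in> V - R \<and> j \<in> R \<and> Q v j}"
proof (rule finite_subset[of _ "V \<times> V"])
  show "{(v,j). v \<in> V - R \<and> j \<in> R \<and> Q v j} \<subseteq> V \<times> V" using assms(2) by blast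
qed (use assms(1) in simp)

lemma card_Un_img:
  assumes "finite V" "R \<subseteq> V" "\<And>v j. (v, j) \<in> g ` C \<Longrightarrow> \<not> (v \<in> V - R \<and> j \<in> R \<and> Q v j)"
    and "inj_on g C" "finite C"
    and "X = {(v,j). v \<in> V - R \<and> j \<in> R \<and> Q v j} \<union> g ` C"
  shows "card X = card {(v,j). v \<in> V - R \<and> j \<in> R \<and> Q v j} + card C"
proof -
  have d: "{(v,j). v \<in> V - R \<and> j \<in> R \<and> Q v j} \<inter> g ` C = {}"
    using assms(3) by blast
  have "card X = card {(v,j). v \<in> V - R \<and> j \<in> R \<and> Q v j} + card (g ` C)"
    unfolding assms(6) by (rule card_Un_disjoint[OF fin_pairs[OF assms(1,2)] finite_imageI[OF assms(5)] d])
  then show ?thesis using card_image[OF assms(4)] by simp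
qed

context
  fixes V :: "nat set" and m :: nat
  assumes fV: "finite V" and mV: "m \<in> V"
begin

lemma min_ins: assumes "\<forall>v\<in>V. m \<le> v" "R' \<subseteq> V - {m}"
  shows "cl V (insert m R') = cl (V - {m}) R'"
    and "cg V (insert m R') = cg (V - {m}) R' + card (V - {m} - R')"
proof -
  have lt: "\<forall>v\<in>V - {m}. m < v" using assms(1) by (auto simp: order.order_iff_strict)
  show "cl V (insert m R') = cl (V - {m}) R'" unfolding cl_def
    by (rule arg_cong[where f=card]) (use assms lt in auto)
  show "cg V (insert m R') = cg (V - {m}) R' + card (V - {m} - R')" unfolding cg_def
    by (rule card_Un_img[where g="\<lambda>v. (v, m)"]) (use assms(2) lt fV mV in \<open>auto simp: inj_on_def\<close>)
qed

lemma min_noins: assumes "\<forall>v\<in>V. m \<le> v" "R \<subseteq> V - {m}"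
  shows "cl V R = cl (V - {m}) R + card R"
    and "cg V R = cg (V - {m}) R"
proof -
  have lt: "\<forall>v\<in>V - {m}. m < v" using assms(1) by (auto simp: order.order_iff_strict)
  have Rm: "\<forall>j\<in>R. m < j" using lt assms(2) by blast
  have fR: "finite R" using finite_subset[OF assms(2)] fV by blast
  show "cg V R = cg (V - {m}) R" unfolding cg_def
    by (rule arg_cong[where f=card]) (use assms(2) Rm in auto)
  show "cl V R = cl (V - {m}) R + card R" unfolding cl_def
    by (rule card_Un_img[where g="\<lambda>j. (m, j)"]) (use assms(2) Rm fR fV mV in \<open>auto simp: inj_on_def\<close>)
qed

lemma max_ins: assumes "\<forall>v\<in>V. v \<le> m" "R' \<subseteq> V - {m}"
  shows "cg V (insert m R') = cg (V - {m}) R'"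
    and "cl V (insert m R') = cl (V - {m}) R' + card (V - {m} - R')"
proof -
  have lt: "\<forall>v\<in>V - {m}. v < m" using assms(1) by (auto simp: order.order_iff_strict)
  show "cg V (insert m R') = cg (V - {m}) R'" unfolding cg_def
    by (rule arg_cong[where f=card]) (use assms lt in auto)
  show "cl V (insert m R') = cl (V - {m}) R' + card (V - {m} - R')" unfolding cl_def
    by (rule card_Un_img[where g="\<lambda>v. (v, m)"]) (use assms(2) lt fV mV in \<open>auto simp: inj_on_def\<close>)
qed

lemma max_noins: assumes "\<forall>v\<in>V. v \<le> m" "R \<subseteq> V - {m}"
  shows "cg V R = cg (V - {m}) R + card R"
    and "cl V R = cl (V - {m}) R"
proof -
  have lt: "\<forall>v\<in>V - {m}. v < m" using assms(1) by (auto simp: order.order_iff_strict)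
  have Rm: "\<forall>j\<in>R. j < m" using lt assms(2) by blast
  have fR: "finite R" using finite_subset[OF assms(2)] fV by blast
  show "cl V R = cl (V - {m}) R" unfolding cl_def
    by (rule arg_cong[where f=card]) (use assms(2) Rm in auto)
  show "cg V R = cg (V - {m}) R + card R" unfolding cg_def
    by (rule card_Un_img[where g="\<lambda>j. (m, j)"]) (use assms(2) Rm fR fV mV in \<open>auto simp: inj_on_def\<close>)
qed

end

lemma loc1:
  fixes x y :: real
  assumes "finite V" "y \<noteq> 0"
  shows "(\<Sum>R\<in>Subs V r. x ^ cl V R * y ^ cg V R) = P x y (card V) r"
  using assms
proof (induction "card V" arbitrary: V r)
  case 0
  then have "V = {}" by simp
  then show ?case by (cases r) (auto simp: Subs_empty P_0 P_zero cl_def cg_def)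
next
  case (Suc h)
  then have "V \<noteq> {}" by auto
  define m where "m = Min V"
  have mV: "m \<in> V" and mle: "\<forall>v\<in>V. m \<le> v" using Suc.prems \<open>V \<noteq> {}\<close> by (auto simp: m_def)
  have cV: "card V = Suc (card (V - {m}))" by (metis card_Suc_Diff1 Suc.prems(1) mV)
  show ?case
  proof (cases r)
    case 0 then show ?thesis using Suc.prems by (simp add: Subs_0 P_0 cl_def cg_def)
  next
    case (Suc r')
    have c1: "card (V - {m} - R') = card V - Suc r'" if "R' \<subseteq> V - {m}" "card R' = r'" for R'
      using that cV Suc.prems(1) by (simp add: card_Diff_subset finite_subset)
    show ?thesis unfolding Suc
    proof (rule loc_gen[OF Suc.prems mV, where f="\<lambda>V R. x ^ cl V R * y ^ cg V R"])
      fix R' assume R': "R' \<subseteq> V - {m}" "card R' = r'"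
      show "x ^ cl V (insert m R') * y ^ cg V (insert m R') = y ^ (card V - Suc r') * (x ^ cl (V - {m}) R' * y ^ cg (V - {m}) R')"
        using min_ins[OF Suc.prems(1) mV mle R'(1)] c1[OF R'] by (simp add: power_add)
    next
      fix R assume R: "R \<subseteq> V - {m}" "card R = Suc r'"
      show "x ^ cl V R * y ^ cg V R = x ^ Suc r' * (x ^ cl (V - {m}) R * y ^ cg (V - {m}) R)"
        using min_noins[OF Suc.prems(1) mV mle R(1)] R(2) by (simp add: power_add)
    next
      fix r
      show "(\<Sum>R\<in>Subs (V - {m}) r. x ^ cl (V - {m}) R * y ^ cg (V - {m}) R) = P x y (card (V - {m})) r"
        using Suc.hyps(1)[of "V - {m}" r] Suc.hyps(2) cV Suc.prems by simp
    qed
  qed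
qed

lemma loc2:
  fixes x y :: real
  assumes "finite V" "y \<noteq> 0"
  shows "(\<Sum>R\<in>Subs V r. x ^ cg V R * y ^ cl V R) = P x y (card V) r"
  using assms
proof (induction "card V" arbitrary: V r)
  case 0
  then have "V = {}" by simp
  then show ?case by (cases r) (auto simp: Subs_empty P_0 P_zero cl_def cg_def)
next
  case (Suc h)
  then have "V \<noteq> {}" by auto
  define m where "m = Max V"
  have mV: "m \<in> V" and mle: "\<forall>v\<in>V. v \<le> m" using Suc.prems \<open>V \<noteq> {}\<close> by (auto simp: m_def)
  have cV: "card V = Suc (card (V - {m}))" by (metis card_Suc_Diff1 Suc.prems(1) mV)
  show ?case
  proof (cases r)
    case 0 then show ?thesis using Suc.prems by (simp add: Subs_0 P_0 cl_def cg_def)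
  next
    case (Suc r')
    have c1: "card (V - {m} - R') = card V - Suc r'" if "R' \<subseteq> V - {m}" "card R' = r'" for R'
      using that cV Suc.prems(1) by (simp add: card_Diff_subset finite_subset)
    show ?thesis unfolding Suc
    proof (rule loc_gen[OF Suc.prems mV, where f="\<lambda>V R. x ^ cg V R * y ^ cl V R"])
      fix R' assume R': "R' \<subseteq> V - {m}" "card R' = r'"
      show "x ^ cg V (insert m R') * y ^ cl V (insert m R') = y ^ (card V - Suc r') * (x ^ cg (V - {m}) R' * y ^ cl (V - {m}) R')"
        using max_ins[OF Suc.prems(1) mV mle R'(1)] c1[OF R'] by (simp add: power_add)
    next
      fix R assume R: "R \<subseteq> V - {m}" "card R = Suc r'"
      show "x ^ cg V R * y ^ cl V R = x ^ Suc r' * (x ^ cg (V - {m}) R * y ^ cl (V - {m}) R)"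
        using max_noins[OF Suc.prems(1) mV mle R(1)] R(2) by (simp add: power_add)
    next
      fix r
      show "(\<Sum>R\<in>Subs (V - {m}) r. x ^ cg (V - {m}) R * y ^ cl (V - {m}) R) = P x y (card (V - {m})) r"
        using Suc.hyps(1)[of "V - {m}" r] Suc.hyps(2) cV Suc.prems by simp
    qed
  qed
qed

definition crA :: "(nat \<times> nat) set \<Rightarrow> nat" where
  "crA A = card {(e, f). e \<in> A \<and> f \<in> A \<and> fst e < fst f \<and> fst f < snd e \<and> snd e < snd f}"
definition neA :: "(nat \<times> nat) set \<Rightarrow> nat" where
  "neA A = card {(e, f). e \<in> A \<and> f \<in> A \<and> fst e < fst f \<and> fst f < snd f \<and> snd f < snd e}"

definition AS :: "nat multiset \<Rightarrow> nat set \<Rightarrow> (nat \<times> nat) set set" where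
  "AS S T = {A. finite A \<and> (\<forall>e\<in>A. fst e < snd e) \<and> inj_on snd A \<and>
                image_mset fst (mset_set A) = S \<and> snd ` A = T}"

lemma AS_mem: "A \<in> AS S T \<Longrightarrow> e \<in> A \<Longrightarrow> fst e \<in># S \<and> snd e \<in> T \<and> fst e < snd e"
  unfolding AS_def by force

lemma AS_finite: "finite T \<Longrightarrow> finite (AS S T)"
proof -
  assume fT: "finite T"
  have "AS S T \<subseteq> Pow (set_mset S \<times> T)"
    using AS_mem by fastforce
  then show ?thesis using fT by (meson finite_Pow_iff finite_SigmaI finite_set_mset finite_subset)
qed

lemma S_decomp: "S = filter_mset (\<lambda>i. i \<noteq> a) S + replicate_mset (count S a) a"
  by (rule multiset_eqI) auto

lemma count_lefts: "finite A \<Longrightarrow> count (image_mset fst (mset_set A)) a = card {e\<in>A. fst e = a}"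
proof -
  assume fA: "finite A"
  have "count (image_mset fst (mset_set A)) a = size (filter_mset (\<lambda>i. i = a) (image_mset fst (mset_set A)))"
    using filter_eq_replicate_mset[where D="image_mset fst (mset_set A)" and x=a] by simp
  also have "\<dots> = size (image_mset fst (filter_mset (\<lambda>e. fst e = a) (mset_set A)))"
    by (simp add: filter_mset_image_mset)
  also have "\<dots> = card {e\<in>A. fst e = a}" using fA by simp
  finally show ?thesis .
qed

lemma pairs_decomp:
  fixes A2 :: "(nat \<times> nat) set" and R T :: "nat set" and a :: nat
  assumes fA: "finite A2" and fT: "finite T" and inj: "inj_on snd A2" and img: "snd ` A2 = T - R"
    and lt: "\<forall>e\<in>A2. fst e < a" and RV: "R \<subseteq> {j\<in>T. a < j}"
    and h1: "\<And>e f. Cnd e f \<Longrightarrow> fst e < fst f"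
    and h2: "\<And>e j. fst e < a \<Longrightarrow> j \<in> R \<Longrightarrow> Cnd e (a, j) \<longleftrightarrow> a < snd e \<and> Qp (snd e) j"
  shows "card {(e, f). e \<in> A2 \<union> {a} \<times> R \<and> f \<in> A2 \<union> {a} \<times> R \<and> Cnd e f}
       = card {(e, f). e \<in> A2 \<and> f \<in> A2 \<and> Cnd e f} + card {(v,j). v \<in> {j\<in>T. a < j} - R \<and> j \<in> R \<and> Qp v j}"
proof -
  define X1 where "X1 = {(e, f). e \<in> A2 \<and> f \<in> A2 \<and> Cnd e f}"
  define X2 where "X2 = {(e, f). e \<in> A2 \<and> f \<in> {a} \<times> R \<and> Cnd e f}"
  have fR: "finite R" using RV fT finite_subset by (metis (no_types, lifting) mem_Collect_eq subsetI subset_iff finite_Collect_conjI)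
  have eq: "{(e, f). e \<in> A2 \<union> {a} \<times> R \<and> f \<in> A2 \<union> {a} \<times> R \<and> Cnd e f} = X1 \<union> X2"
  proof (intro equalityI subsetI)
    fix p assume "p \<in> {(e, f). e \<in> A2 \<union> {a} \<times> R \<and> f \<in> A2 \<union> {a} \<times> R \<and> Cnd e f}"
    then obtain e f where p: "p = (e, f)" "e \<in> A2 \<union> {a} \<times> R" "f \<in> A2 \<union> {a} \<times> R" "Cnd e f" by blast
    have "e \<notin> {a} \<times> R"
    proof
      assume "e \<in> {a} \<times> R"
      then have "fst e = a" by auto
      moreover have "fst e < fst f" using h1 p(4) .
      moreover have "fst f \<le> a" using p(3) lt by auto
      ultimately show False by simp
    qed
    then show "p \<in> X1 \<union> X2" using p unfolding X1_def X2_def by auto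
  qed (auto simp: X1_def X2_def)
  have fX1: "finite X1" unfolding X1_def by (rule finite_subset[of _ "A2 \<times> A2"]) (auto simp: fA)
  have fX2: "finite X2" unfolding X2_def by (rule finite_subset[of _ "A2 \<times> ({a} \<times> R)"]) (auto simp: fA fR)
  have dj: "X1 \<inter> X2 = {}" unfolding X1_def X2_def using lt by auto
  have injX2: "inj_on (\<lambda>(e, f). (snd e, snd f)) X2"
  proof (rule inj_onI)
    fix p q assume "p \<in> X2" "q \<in> X2" "(\<lambda>(e, f). (snd e, snd f)) p = (\<lambda>(e, f). (snd e, snd f)) q"
    then show "p = q" unfolding X2_def using inj by (auto simp: inj_on_def)
  qed
  have imX2: "(\<lambda>(e, f). (snd e, snd f)) ` X2 = {(v,j). v \<in> {j\<in>T. a < j} - R \<and> j \<in> R \<and> Qp v j}"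
  proof (intro equalityI subsetI)
    fix p assume "p \<in> (\<lambda>(e, f). (snd e, snd f)) ` X2"
    then obtain e j where ej: "p = (snd e, j)" "e \<in> A2" "j \<in> R" "Cnd e (a, j)" unfolding X2_def by auto
    then have "a < snd e \<and> Qp (snd e) j" using h2 lt by blast
    moreover have "snd e \<in> T - R" using img ej(2) by blast
    ultimately show "p \<in> {(v,j). v \<in> {j\<in>T. a < j} - R \<and> j \<in> R \<and> Qp v j}" using ej by auto
  next
    fix p assume "p \<in> {(v,j). v \<in> {j\<in>T. a < j} - R \<and> j \<in> R \<and> Qp v j}"
    then obtain v j where vj: "p = (v, j)" "v \<in> T" "a < v" "v \<notin> R" "j \<in> R" "Qp v j" by auto
    then obtain e where e: "e \<in> A2" "snd e = v" using img by (metis DiffI imageE)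
    then have "Cnd e (a, j)" using h2 lt vj by auto
    then have "(e, (a, j)) \<in> X2" using e vj unfolding X2_def by auto
    then show "p \<in> (\<lambda>(e, f). (snd e, snd f)) ` X2" using e vj by force
  qed
  show ?thesis
    unfolding eq card_Un_disjoint[OF fX1 fX2 dj]
    using card_image[OF injX2] imX2 by (simp add: X1_def)
qed

definition hh :: "nat multiset \<Rightarrow> nat set \<Rightarrow> nat \<Rightarrow> int" where
  "hh S T a = int (card {j \<in> T. j > a}) - int (size (filter_mset (\<lambda>j. j > a) S))"
definition Qf :: "real \<Rightarrow> real \<Rightarrow> nat multiset \<Rightarrow> nat set \<Rightarrow> nat \<Rightarrow> real" where
  "Qf x y S T a = y powi (int (count S a) * hh S T a - int (count S a) ^ 2) *
         (if hh S T a < 0 then 0 else poly (qbinom (nat (hh S T a)) (count S a)) (x / y))"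
definition Lw :: "bool \<Rightarrow> real \<Rightarrow> real \<Rightarrow> nat set \<Rightarrow> nat set \<Rightarrow> real" where
  "Lw b x y V R = (if b then x ^ cl V R * y ^ cg V R else x ^ cg V R * y ^ cl V R)"
definition Wt :: "bool \<Rightarrow> real \<Rightarrow> real \<Rightarrow> (nat \<times> nat) set \<Rightarrow> real" where
  "Wt b x y A = (if b then x ^ crA A * y ^ neA A else x ^ neA A * y ^ crA A)"

lemma Lw_sum: "finite V \<Longrightarrow> y \<noteq> 0 \<Longrightarrow> (\<Sum>R\<in>Subs V r. Lw b x y V R) = P x y (card V) r"
  unfolding Lw_def by (cases b) (simp_all add: loc1 loc2)

lemma Qf_top: assumes "hh S T a = int h" "y \<noteq> 0"
  shows "Qf x y S T a = P x y h (count S a)"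
proof (cases "count S a \<le> h")
  case True
  then have e: "int (count S a) * int h - int (count S a) ^ 2 = int (count S a * (h - count S a))"
    by (simp add: power2_eq_square right_diff_distrib of_nat_diff algebra_simps)
  have pw: "y powi (int (count S a) * hh S T a - int (count S a) ^ 2) = y ^ (count S a * (h - count S a))"
    unfolding assms(1) e by (rule power_int_of_nat)
  show ?thesis unfolding Qf_def P_def pw using assms by (simp add: qbinom_Gp)
next
  case False
  then show ?thesis using assms by (simp add: Qf_def P_def qbinom_Gp Gp_zero)
qed

definition S2 :: "nat multiset \<Rightarrow> nat \<Rightarrow> nat multiset" where "S2 S a = filter_mset (\<lambda>i. i \<noteq> a) S"
definition V :: "nat set \<Rightarrow> nat \<Rightarrow> nat set" where "V T a = {j\<in>T. a < j}"
definition r :: "nat multiset \<Rightarrow> nat \<Rightarrow> nat" where "r S a = count S a"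
definition gl :: "nat \<Rightarrow> nat set \<times> (nat \<times> nat) set \<Rightarrow> (nat \<times> nat) set" where "gl a = (\<lambda>(R, A2). A2 \<union> {a} \<times> R)"

context
  fixes S :: "nat multiset" and T :: "nat set" and a :: nat
  assumes fT: "finite T" and aS: "a \<in># S" and amax: "\<forall>i\<in>#S. i \<le> a"
begin


lemma fV: "finite (V T a)" using fT by (simp add: V_def)

lemma S2_mem: "A2 \<in> AS (S2 S a) T2 \<Longrightarrow> e \<in> A2 \<Longrightarrow> fst e < a \<and> fst e \<in># S"
  using AS_mem[of A2 "S2 S a" T2 e] amax unfolding S2_def by force

lemma S_eq: "S = (S2 S a) + replicate_mset (r S a) a"
  unfolding S2_def r_def by (rule S_decomp)

lemma gl_in:
  assumes R: "R \<in> Subs (V T a) (r S a)" and A2: "A2 \<in> AS (S2 S a) (T - R)"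
  shows "(gl a) (R, A2) \<in> AS S T"
proof -
  have RT: "R \<subseteq> T" and Ra: "\<forall>j\<in>R. a < j" and cR: "card R = (r S a)"
    using R by (auto simp: Subs_def V_def)
  have fR: "finite R" using RT fT finite_subset by blast
  have fA2: "finite A2" and ltA2: "\<forall>e\<in>A2. fst e < snd e" and injA2: "inj_on snd A2"
    and lA2: "image_mset fst (mset_set A2) = (S2 S a)" and sA2: "snd ` A2 = T - R"
    using A2 by (auto simp: AS_def)
  have dj: "A2 \<inter> {a} \<times> R = {}" using S2_mem[OF A2] by fastforce
  have "image_mset fst (mset_set ({a} \<times> R)) = replicate_mset (r S a) a"
  proof -
    have "Pair a ` R = {a} \<times> R" by auto
    moreover have "image_mset (Pair a) (mset_set R) = mset_set (Pair a ` R)"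
      by (rule image_mset_mset_set) (auto simp: inj_on_def)
    ultimately have "mset_set ({a} \<times> R) = image_mset (Pair a) (mset_set R)" by simp
    then show ?thesis using cR by (simp add: multiset.map_comp o_def image_mset_const_eq)
  qed
  then have lefts: "image_mset fst (mset_set (A2 \<union> {a} \<times> R)) = S"
    using mset_set_Union[OF fA2 _ dj] fR lA2 S_eq by simp
  have inj: "inj_on snd (A2 \<union> {a} \<times> R)"
  proof -
    have dR: "\<forall>e\<in>A2. snd e \<notin> R" using sA2 by auto
    show ?thesis unfolding inj_on_Un using injA2 dR by (auto simp: inj_on_def)
  qed
  have "snd ` ({a} \<times> R) = R" by force
  then have "snd ` (A2 \<union> {a} \<times> R) = T" using sA2 RT by (simp add: image_Un) blast
  then show ?thesis using fA2 fR ltA2 Ra lefts inj unfolding gl_def AS_def by auto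
qed

lemma gl_inj: "inj_on (gl a) (SIGMA R:Subs (V T a) (r S a). AS (S2 S a) (T - R))"
proof (rule inj_onI)
  fix p q assume p: "p \<in> (SIGMA R:Subs (V T a) (r S a). AS (S2 S a) (T - R))" and q: "q \<in> (SIGMA R:Subs (V T a) (r S a). AS (S2 S a) (T - R))"
    and eq: "(gl a) p = (gl a) q"
  obtain R1 A1 where p': "p = (R1, A1)" "A1 \<in> AS (S2 S a) (T - R1)" using p by auto
  obtain R2 A2 where q': "q = (R2, A2)" "A2 \<in> AS (S2 S a) (T - R2)" using q by auto
  have n1: "\<forall>e\<in>A1. fst e \<noteq> a" and n2: "\<forall>e\<in>A2. fst e \<noteq> a" using S2_mem p'(2) q'(2) by fastforce+
  have eq': "A1 \<union> {a} \<times> R1 = A2 \<union> {a} \<times> R2" using eq p' q' by (simp add: gl_def)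
  have "R1 = {j. (a, j) \<in> A1 \<union> {a} \<times> R1}" using n1 by auto
  also have "\<dots> = R2" using n2 eq' by auto
  finally have "R1 = R2" .
  moreover have "A1 = A2"
  proof -
    have "A1 = (A1 \<union> {a} \<times> R1) - {a} \<times> UNIV" using n1 by auto
    also have "\<dots> = (A2 \<union> {a} \<times> R2) - {a} \<times> UNIV" using eq' by simp
    also have "\<dots> = A2" using n2 by auto
    finally show ?thesis .
  qed
  ultimately show "p = q" using p' q' by simp
qed

lemma gl_surj: assumes A: "A \<in> AS S T"
  shows "A \<in> (gl a) ` (SIGMA R:Subs (V T a) (r S a). AS (S2 S a) (T - R))"
proof -
  define R where "R = {j. (a, j) \<in> A}"
  define A2 where "A2 = {e\<in>A. fst e \<noteq> a}"
  have fA: "finite A" and ltA: "\<forall>e\<in>A. fst e < snd e" and injA: "inj_on snd A"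
    and lA: "image_mset fst (mset_set A) = S" and sA: "snd ` A = T"
    using A by (auto simp: AS_def)
  have AR: "A = A2 \<union> {a} \<times> R" unfolding A2_def R_def by auto
  have RV: "R \<subseteq> (V T a)" unfolding R_def V_def using ltA sA by force
  have "{e\<in>A. fst e = a} = {a} \<times> R" unfolding R_def by auto
  then have "card R = (r S a)" using count_lefts[OF fA, of a] lA
    by (simp add: r_def card_cartesian_product_singleton)
  then have RS: "R \<in> Subs (V T a) (r S a)" using RV by (simp add: Subs_def)
  have "image_mset fst (mset_set A2) = (S2 S a)"
  proof -
    have "mset_set A2 = filter_mset (\<lambda>e. fst e \<noteq> a) (mset_set A)"
      using fA by (simp add: A2_def)
    then show ?thesis using lA image_mset_filter_mset_swap[of fst "\<lambda>i. i \<noteq> a" "mset_set A"]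
      by (simp add: S2_def)
  qed
  moreover have "snd ` A2 = T - R"
  proof (intro equalityI subsetI)
    fix v assume "v \<in> snd ` A2"
    then obtain e where e: "e \<in> A" "fst e \<noteq> a" "v = snd e" unfolding A2_def by auto
    have "v \<notin> R"
    proof
      assume "v \<in> R"
      then have "(a, v) \<in> A" unfolding R_def by simp
      then have "e = (a, v)" using injA e by (auto simp: inj_on_def)
      then show False using e(2) by (metis fst_conv)
    qed
    then show "v \<in> T - R" using e sA by auto
  next
    fix v assume "v \<in> T - R"
    then obtain e where "e \<in> A" "snd e = v" "v \<notin> R" using sA by auto
    then show "v \<in> snd ` A2" unfolding A2_def R_def by (cases e) force
  qed
  ultimately have "A2 \<in> AS (S2 S a) (T - R)"
    using fA ltA injA unfolding AS_def A2_def by (auto intro: inj_on_subset)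
  then show ?thesis using RS AR unfolding gl_def by force
qed

lemma AS_eq: "AS S T = (gl a) ` (SIGMA R:Subs (V T a) (r S a). AS (S2 S a) (T - R))"
  using gl_surj gl_in by blast

lemma Wt_split:
  assumes R: "R \<in> Subs (V T a) (r S a)" and A2: "A2 \<in> AS (S2 S a) (T - R)"
  shows "Wt b x y (A2 \<union> {a} \<times> R) = Wt b x y A2 * Lw b x y (V T a) R"
proof -
  have fA2: "finite A2" and injA2: "inj_on snd A2" and sA2: "snd ` A2 = T - R"
    using A2 by (auto simp: AS_def)
  have lt: "\<forall>e\<in>A2. fst e < a" using S2_mem[OF A2] by blast
  have RV: "R \<subseteq> {j\<in>T. a < j}" using R by (auto simp: Subs_def V_def)
  have "crA (A2 \<union> {a} \<times> R) = crA A2 + cl (V T a) R"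
    unfolding crA_def cl_def V_def
    by (rule pairs_decomp[OF fA2 fT injA2 sA2 lt RV]) auto
  moreover have "neA (A2 \<union> {a} \<times> R) = neA A2 + cg (V T a) R"
    unfolding neA_def cg_def V_def
    by (rule pairs_decomp[OF fA2 fT injA2 sA2 lt RV]) (use RV in auto)
  ultimately show ?thesis by (simp add: Wt_def Lw_def power_add)
qed

end

lemma filter_rep: "Q a \<Longrightarrow> filter_mset Q (replicate_mset n a) = replicate_mset n a"
  by (induct n) auto

lemma filter_none: "\<forall>i\<in>#S. \<not> Q i \<Longrightarrow> filter_mset Q S = {#}"
  by (induct S) auto

context
  fixes S :: "nat multiset" and T :: "nat set" and a :: nat
  assumes fT: "finite T" and aS: "a \<in># S" and amax: "\<forall>i\<in>#S. i \<le> a"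
begin

lemma r_pos: "r S a > 0" using aS by (simp add: r_def)

lemma size_S: "size S = size (S2 S a) + r S a"
  using S_eq[OF fT aS amax] by (metis size_replicate_mset size_union)

lemma card_TR: assumes "R \<in> Subs (V T a) (r S a)" shows "card (T - R) = card T - r S a"
proof -
  have RT: "R \<subseteq> T" and cR: "card R = r S a" using assms by (auto simp: Subs_def V_def)
  have fR: "finite R" using RT fT finite_subset by blast
  show ?thesis using card_Diff_subset[OF fR RT] cR by simp
qed

lemma set_S: "set_mset S = insert a (set_mset (S2 S a))" "a \<notin># S2 S a"
  using aS by (auto simp: S2_def)

lemma Qf_shift:
  assumes R: "R \<in> Subs (V T a) (r S a)" and c: "c \<in># S2 S a"
  shows "Qf x y (S2 S a) (T - R) c = Qf x y S T c"
proof -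
  have cS: "c \<in># S" "c \<noteq> a" using c by (auto simp: S2_def)
  have "c \<le> a" using amax cS(1) by blast
  then have ca: "c < a" using cS(2) by simp
  have RT: "R \<subseteq> T" and Ra: "\<forall>j\<in>R. a < j" and cR: "card R = r S a"
    using R by (auto simp: Subs_def V_def)
  have fR: "finite R" using RT fT finite_subset by blast
  have cnt: "count (S2 S a) c = count S c" using cS by (simp add: S2_def)
  have "{j \<in> T. j > c} = {j \<in> T - R. j > c} \<union> R" using RT Ra ca by auto
  then have e1: "card {j \<in> T. j > c} = card {j \<in> T - R. j > c} + r S a"
    using card_Un_disjoint[of "{j \<in> T - R. j > c}" R] fT fR cR by auto
  have e2: "size (filter_mset (\<lambda>j. j > c) S) = size (filter_mset (\<lambda>j. j > c) (S2 S a)) + r S a"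
    using ca by (subst S_eq[OF fT aS amax]) (simp add: filter_rep)
  have "hh (S2 S a) (T - R) c = hh S T c" unfolding hh_def e1 e2 by simp
  then show ?thesis by (simp add: Qf_def cnt)
qed

lemma hh_top: "hh S T a = int (card (V T a))"
proof -
  have "filter_mset (\<lambda>j. j > a) S = {#}" using amax by (intro filter_none) auto
  then show ?thesis by (simp add: hh_def V_def)
qed

lemma step:
  assumes y: "y \<noteq> 0"
    and IH: "\<And>R. R \<in> Subs (V T a) (r S a) \<Longrightarrow>
       (\<Sum>A\<in>AS (S2 S a) (T - R). Wt b x y A) = (\<Prod>c\<in>set_mset (S2 S a). Qf x y (S2 S a) (T - R) c)"
  shows "(\<Sum>A\<in>AS S T. Wt b x y A) = (\<Prod>c\<in>set_mset S. Qf x y S T c)"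
proof -
  let ?V = "V T a" and ?r = "r S a" and ?S2 = "S2 S a"
  define Pi0 where "Pi0 = (\<Prod>c\<in>set_mset ?S2. Qf x y S T c)"
  have fS: "finite (Subs ?V ?r)" using finite_Subs fV[OF fT aS amax] by blast
  have fAS: "\<forall>R\<in>Subs ?V ?r. finite (AS ?S2 (T - R))" using AS_finite fT by blast
  have "(\<Sum>A\<in>AS S T. Wt b x y A) = (\<Sum>p\<in>(SIGMA R:Subs ?V ?r. AS ?S2 (T - R)). Wt b x y (gl a p))"
    unfolding AS_eq[OF fT aS amax] by (rule sum.reindex[OF gl_inj[OF fT aS amax], unfolded comp_def])
  also have "\<dots> = (\<Sum>(R, A2)\<in>(SIGMA R:Subs ?V ?r. AS ?S2 (T - R)). Wt b x y (A2 \<union> {a} \<times> R))"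
    by (rule sum.cong) (auto simp: gl_def)
  also have "\<dots> = (\<Sum>R\<in>Subs ?V ?r. \<Sum>A2\<in>AS ?S2 (T - R). Wt b x y (A2 \<union> {a} \<times> R))"
    by (rule sum.Sigma[OF fS fAS, symmetric])
  also have "\<dots> = (\<Sum>R\<in>Subs ?V ?r. \<Sum>A2\<in>AS ?S2 (T - R). Wt b x y A2 * Lw b x y ?V R)"
  proof (rule sum.cong[OF refl])
    fix R assume R: "R \<in> Subs ?V ?r"
    show "(\<Sum>A2\<in>AS ?S2 (T - R). Wt b x y (A2 \<union> {a} \<times> R)) = (\<Sum>A2\<in>AS ?S2 (T - R). Wt b x y A2 * Lw b x y ?V R)"
      by (rule sum.cong[OF refl]) (rule Wt_split[OF fT aS amax R])
  qed
  also have "\<dots> = (\<Sum>R\<in>Subs ?V ?r. Lw b x y ?V R * Pi0)"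
  proof (rule sum.cong[OF refl])
    fix R assume R: "R \<in> Subs ?V ?r"
    have "(\<Sum>A2\<in>AS ?S2 (T - R). Wt b x y A2 * Lw b x y ?V R) = (\<Sum>A2\<in>AS ?S2 (T - R). Wt b x y A2) * Lw b x y ?V R"
      by (rule sum_distrib_right[symmetric])
    also have "\<dots> = (\<Prod>c\<in>set_mset ?S2. Qf x y ?S2 (T - R) c) * Lw b x y ?V R" using IH[OF R] by simp
    also have "(\<Prod>c\<in>set_mset ?S2. Qf x y ?S2 (T - R) c) = Pi0"
      unfolding Pi0_def by (rule prod.cong[OF refl]) (rule Qf_shift[OF R])
    finally show "(\<Sum>A2\<in>AS ?S2 (T - R). Wt b x y A2 * Lw b x y ?V R) = Lw b x y ?V R * Pi0" by simp
  qed
  also have "\<dots> = P x y (card ?V) ?r * Pi0"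
    by (simp add: sum_distrib_right[symmetric] Lw_sum fV[OF fT aS amax] y)
  also have "P x y (card ?V) ?r = Qf x y S T a"
    using Qf_top[OF hh_top y] by (simp add: r_def)
  also have "Qf x y S T a * Pi0 = (\<Prod>c\<in>set_mset S. Qf x y S T c)"
    unfolding Pi0_def set_S(1) using set_S(2) by simp
  finally show ?thesis .
qed

end

lemma AS_empty: "AS {#} {} = {{}}"
  unfolding AS_def by (auto simp: mset_set_empty_iff)

lemma main_AS:
  assumes "finite T" "card T = size S" "y \<noteq> 0"
  shows "(\<Sum>A\<in>AS S T. Wt b x y A) = (\<Prod>a\<in>set_mset S. Qf x y S T a)"
  using assms
proof (induction "size S" arbitrary: S T rule: less_induct)
  case less
  show ?case
  proof (cases "S = {#}")
    case True
    then have "T = {}" using less.prems by simp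
    then show ?thesis using True by (simp add: AS_empty Wt_def crA_def neA_def)
  next
    case False
    define a where "a = Max (set_mset S)"
    have aS: "a \<in># S" and amax: "\<forall>i\<in>#S. i \<le> a" using False by (auto simp: a_def)
    note fT = less.prems(1)
    show ?thesis
    proof (rule step[OF fT aS amax less.prems(3)])
      fix R assume R: "R \<in> Subs (V T a) (r S a)"
      have "size (S2 S a) < size S" using size_S[OF fT aS amax] r_pos[OF fT aS amax] by simp
      moreover have "card (T - R) = size (S2 S a)"
        using card_TR[OF fT aS amax R] size_S[OF fT aS amax] less.prems(2) by simp
      ultimately show "(\<Sum>A\<in>AS (S2 S a) (T - R). Wt b x y A) = (\<Prod>c\<in>set_mset (S2 S a). Qf x y (S2 S a) (T - R) c)"
        using less.hyps[of "S2 S a" "T - R"] fT less.prems(3) by simp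
    qed
  qed
qed

definition succs :: "(nat \<times> nat) set \<Rightarrow> nat \<Rightarrow> nat set" where
  "succs A i = {j. (i, j) \<in> A}"
definition blocks :: "nat \<Rightarrow> (nat \<times> nat) set \<Rightarrow> nat set set" where
  "blocks n A = (\<lambda>i. insert i (succs A i)) ` {i \<in> {1..n}. succs A i \<noteq> {} \<or> i \<notin> snd ` A}"

context
  fixes n :: nat and \<pi> :: "nat set set"
  assumes lp: "linked_partition n \<pi>"
begin

lemma lp_fin: assumes "E \<in> \<pi>" shows "finite E \<and> E \<noteq> {} \<and> E \<subseteq> {1..n} \<and> Min E \<in> E"
proof -
  have h: "E \<noteq> {} \<and> E \<subseteq> {1..n}" using lp assms unfolding linked_partition_def by blast
  then have "finite E" using finite_subset by blast
  then show ?thesis using h Min_in by blast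
qed

lemma lp_nd: "E \<in> \<pi> \<Longrightarrow> F \<in> \<pi> \<Longrightarrow> E \<noteq> F \<Longrightarrow> i \<in> E \<Longrightarrow> i \<in> F \<Longrightarrow>
   (i = Min E \<and> card E > 1 \<and> i \<noteq> Min F) \<or> (i = Min F \<and> card F > 1 \<and> i \<noteq> Min E)"
  using lp unfolding linked_partition_def nearly_disjoint_def by blast

lemma lp_min_unique: assumes "E \<in> \<pi>" "F \<in> \<pi>" "Min E = Min F" shows "E = F"
proof (rule ccontr)
  assume ne: "E \<noteq> F"
  have "Min E \<in> E" "Min E \<in> F" using lp_fin[OF assms(1)] lp_fin[OF assms(2)] assms(3) by auto
  then show False using lp_nd[OF assms(1,2) ne, of "Min E"] assms(3) by auto
qed

lemma lp_nonmin_unique: assumes "E \<in> \<pi>" "F \<in> \<pi>" "j \<in> E" "j \<noteq> Min E" "j \<in> F" "j \<noteq> Min F" shows "E = F"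
proof (rule ccontr)
  assume ne: "E \<noteq> F"
  show False using lp_nd[OF assms(1,2) ne assms(3) assms(5)] assms(4,6) by auto
qed

lemma arcs_iff: "p \<in> arcs \<pi> \<longleftrightarrow> (\<exists>E\<in>\<pi>. fst p = Min E \<and> snd p \<in> E \<and> snd p \<noteq> Min E)"
proof
  assume "p \<in> arcs \<pi>" then show "\<exists>E\<in>\<pi>. fst p = Min E \<and> snd p \<in> E \<and> snd p \<noteq> Min E"
    unfolding arcs_def by auto
next
  assume "\<exists>E\<in>\<pi>. fst p = Min E \<and> snd p \<in> E \<and> snd p \<noteq> Min E"
  then obtain E where E: "E \<in> \<pi>" "fst p = Min E" "snd p \<in> E" "snd p \<noteq> Min E" by blast
  have "card {Min E, snd p} \<le> card E" using lp_fin[OF E(1)] E(3) by (intro card_mono) auto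
  then have "card E \<ge> 2" using E(4) by simp
  then show "p \<in> arcs \<pi>" unfolding arcs_def using E by (cases p) auto
qed

lemma arcs_valid: "finite (arcs \<pi>) \<and> (\<forall>e\<in>arcs \<pi>. fst e < snd e) \<and> inj_on snd (arcs \<pi>) \<and> arcs \<pi> \<subseteq> {1..n} \<times> {1..n}"
proof (intro conjI)
  show sub: "arcs \<pi> \<subseteq> {1..n} \<times> {1..n}"
  proof
    fix p assume "p \<in> arcs \<pi>"
    then obtain E where E: "E \<in> \<pi>" "fst p = Min E" "snd p \<in> E" using arcs_iff by blast
    have "E \<subseteq> {1..n}" "Min E \<in> E" using lp_fin[OF E(1)] by auto
    then have "fst p \<in> {1..n}" "snd p \<in> {1..n}" using E by auto
    then show "p \<in> {1..n} \<times> {1..n}" by (simp add: mem_Times_iff)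
  qed
  then show "finite (arcs \<pi>)" by (rule finite_subset) simp
  show "\<forall>e\<in>arcs \<pi>. fst e < snd e"
  proof
    fix p assume "p \<in> arcs \<pi>"
    then obtain E where E: "E \<in> \<pi>" "fst p = Min E" "snd p \<in> E" "snd p \<noteq> Min E" using arcs_iff by blast
    then have "Min E \<le> snd p" using lp_fin by simp
    then show "fst p < snd p" using E by simp
  qed
  show "inj_on snd (arcs \<pi>)"
  proof (rule inj_onI)
    fix p q assume "p \<in> arcs \<pi>" "q \<in> arcs \<pi>" "snd p = snd q"
    obtain E where E: "E \<in> \<pi>" "fst p = Min E" "snd p \<in> E" "snd p \<noteq> Min E"
      using arcs_iff \<open>p \<in> arcs \<pi>\<close> by blast
    obtain F where F: "F \<in> \<pi>" "fst q = Min F" "snd q \<in> F" "snd q \<noteq> Min F"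
      using arcs_iff \<open>q \<in> arcs \<pi>\<close> by blast
    have "E = F" using lp_nonmin_unique[OF E(1) F(1) E(3) E(4)] F(3,4) \<open>snd p = snd q\<close> by simp
    then show "p = q" using E F \<open>snd p = snd q\<close> by (simp add: prod_eq_iff)
  qed
qed

lemma succs_block: assumes E: "E \<in> \<pi>" "E \<noteq> {Min E}"
  shows "succs (arcs \<pi>) (Min E) = E - {Min E}"
proof (intro equalityI subsetI)
  fix j assume "j \<in> succs (arcs \<pi>) (Min E)"
  then obtain F where F: "F \<in> \<pi>" "Min E = Min F" "j \<in> F" "j \<noteq> Min F" unfolding succs_def using arcs_iff by force
  then have "F = E" using lp_min_unique E by metis
  then show "j \<in> E - {Min E}" using F by auto
next
  fix j assume "j \<in> E - {Min E}"
  then show "j \<in> succs (arcs \<pi>) (Min E)" unfolding succs_def using arcs_iff E by auto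
qed

lemma single_block: assumes E: "E \<in> \<pi>" "E = {i}"
  shows "succs (arcs \<pi>) i = {}" "i \<notin> snd ` arcs \<pi>"
proof -
  show "succs (arcs \<pi>) i = {}"
  proof (rule ccontr)
    assume "succs (arcs \<pi>) i \<noteq> {}"
    then obtain j where "(i, j) \<in> arcs \<pi>" unfolding succs_def by auto
    then obtain F where F: "F \<in> \<pi>" "i = Min F" "j \<in> F" "j \<noteq> Min F" using arcs_iff[of "(i, j)"] by auto
    have "j \<notin> E" using E(2) F(2) F(4) by simp
    then have ne: "E \<noteq> F" using F(3) by blast
    have iF: "i \<in> F" using F lp_fin[OF F(1)] by auto
    have "(i = Min E \<and> card E > 1 \<and> i \<noteq> Min F) \<or> (i = Min F \<and> card F > 1 \<and> i \<noteq> Min E)"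
      by (rule lp_nd[OF E(1) F(1) ne _ iF]) (simp add: E(2))
    then show False using E(2) by simp
  qed
  show "i \<notin> snd ` arcs \<pi>"
  proof
    assume "i \<in> snd ` arcs \<pi>"
    then obtain p where p: "p \<in> arcs \<pi>" "snd p = i" by auto
    then obtain F where F: "F \<in> \<pi>" "i \<in> F" "i \<noteq> Min F" using arcs_iff[of p] by auto
    have "Min E = i" using E(2) by simp
    then have ne: "E \<noteq> F" using F(3) by blast
    have "(i = Min E \<and> card E > 1 \<and> i \<noteq> Min F) \<or> (i = Min F \<and> card F > 1 \<and> i \<noteq> Min E)"
      by (rule lp_nd[OF E(1) F(1) ne _ F(2)]) (simp add: E(2))
    then show False using E(2) F(3) by simp
  qed
qed

lemma blocks_arcs: "blocks n (arcs \<pi>) = \<pi>"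
proof (intro equalityI subsetI)
  fix B assume "B \<in> blocks n (arcs \<pi>)"
  then obtain i where i: "i \<in> {1..n}" "succs (arcs \<pi>) i \<noteq> {} \<or> i \<notin> snd ` arcs \<pi>"
    "B = insert i (succs (arcs \<pi>) i)" unfolding blocks_def by auto
  show "B \<in> \<pi>"
  proof (cases "succs (arcs \<pi>) i = {}")
    case False
    then obtain j where "(i, j) \<in> arcs \<pi>" unfolding succs_def by auto
    then obtain E where E: "E \<in> \<pi>" "i = Min E" "j \<in> E" "j \<noteq> Min E" using arcs_iff[of "(i, j)"] by auto
    then have "E \<noteq> {Min E}" by auto
    then have "succs (arcs \<pi>) i = E - {i}" using succs_block E by simp
    then show ?thesis using i(3) E lp_fin[OF E(1)] by (simp add: insert_absorb)
  next
    case True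
    then have ns: "i \<notin> snd ` arcs \<pi>" using i(2) by simp
    have "i \<in> \<Union>\<pi>" using lp i(1) unfolding linked_partition_def by auto
    then obtain E where E: "E \<in> \<pi>" "i \<in> E" by auto
    have "i = Min E"
    proof (rule ccontr)
      assume "i \<noteq> Min E"
      then have "(Min E, i) \<in> arcs \<pi>" using arcs_iff[of "(Min E, i)"] E by auto
      then show False using ns by force
    qed
    have "E = {Min E}"
    proof (rule ccontr)
      assume "E \<noteq> {Min E}"
      then have "succs (arcs \<pi>) i = E - {i}" using succs_block E \<open>i = Min E\<close> by simp
      then show False using True \<open>E \<noteq> {Min E}\<close> \<open>i = Min E\<close> E(2) by auto
    qed
    then show ?thesis using i(3) True E \<open>i = Min E\<close> by simp
  qed
next
  fix E assume E: "E \<in> \<pi>"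
  define i where "i = Min E"
  have iE: "i \<in> E" and iN: "i \<in> {1..n}" using lp_fin[OF E] by (auto simp: i_def)
  show "E \<in> blocks n (arcs \<pi>)"
  proof (cases "E = {i}")
    case True
    then show ?thesis using single_block[OF E True] iN unfolding blocks_def by force
  next
    case False
    then have s: "succs (arcs \<pi>) i = E - {i}" using succs_block E by (simp add: i_def)
    then have "succs (arcs \<pi>) i \<noteq> {}" using False iE by auto
    moreover have "E = insert i (succs (arcs \<pi>) i)" using s iE by auto
    ultimately show ?thesis using iN unfolding blocks_def by blast
  qed
qed

end

context
  fixes n :: nat and A :: "(nat \<times> nat) set"
  assumes fA: "finite A" and ltA: "\<forall>e\<in>A. fst e < snd e" and injA: "inj_on snd A"
    and bA: "A \<subseteq> {1..n} \<times> {1..n}"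
begin

lemma succs_gt: "j \<in> succs A i \<Longrightarrow> i < j \<and> j \<in> {1..n}"
  unfolding succs_def using ltA bA by fastforce

lemma succs_fin: "finite (succs A i)"
proof -
  have "succs A i \<subseteq> snd ` A" unfolding succs_def by force
  then show ?thesis using fA finite_subset by blast
qed

lemma Min_B: "Min (insert i (succs A i)) = i"
proof -
  have "\<forall>j\<in>succs A i. i \<le> j" using succs_gt by fastforce
  then show ?thesis using succs_fin by (simp add: Min_insert2)
qed

lemma card_B: "succs A i \<noteq> {} \<Longrightarrow> card (insert i (succs A i)) > 1"
proof -
  assume ne: "succs A i \<noteq> {}"
  have "i \<notin> succs A i" using succs_gt by blast
  then have "card (insert i (succs A i)) = Suc (card (succs A i))" using succs_fin by simp
  moreover have "card (succs A i) > 0" using ne succs_fin by (simp add: card_gt_0_iff)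
  ultimately show ?thesis by simp
qed

lemma blocks_lp: "linked_partition n (blocks n A)"
  unfolding linked_partition_def
proof (intro conjI ballI impI)
  fix E assume "E \<in> blocks n A"
  then obtain i where i: "i \<in> {1..n}" "E = insert i (succs A i)" unfolding blocks_def by auto
  then show "E \<noteq> {}" by simp
  show "E \<subseteq> {1..n}" using i succs_gt by auto
next
  show "\<Union> (blocks n A) = {1..n}"
  proof (intro equalityI subsetI)
    fix k assume "k \<in> \<Union> (blocks n A)"
    then obtain i where "i \<in> {1..n}" "k \<in> insert i (succs A i)" unfolding blocks_def by auto
    then show "k \<in> {1..n}" using succs_gt by auto
  next
    fix k assume k: "k \<in> {1..n}"
    show "k \<in> \<Union> (blocks n A)"
    proof (cases "k \<in> snd ` A")
      case False
      then have "insert k (succs A k) \<in> blocks n A" using k unfolding blocks_def by blast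
      then show ?thesis by blast
    next
      case True
      then obtain i where ik: "(i, k) \<in> A" by force
      then have "i \<in> {1..n}" using bA by auto
      moreover have "k \<in> succs A i" using ik by (simp add: succs_def)
      ultimately have "insert i (succs A i) \<in> blocks n A" unfolding blocks_def by blast
      then show ?thesis using \<open>k \<in> succs A i\<close> by blast
    qed
  qed
next
  fix E F assume E: "E \<in> blocks n A" and F: "F \<in> blocks n A" and ne: "E \<noteq> F"
  obtain i where i: "i \<in> {1..n}" "succs A i \<noteq> {} \<or> i \<notin> snd ` A" "E = insert i (succs A i)"
    using E unfolding blocks_def by auto
  obtain k where k: "k \<in> {1..n}" "succs A k \<noteq> {} \<or> k \<notin> snd ` A" "F = insert k (succs A k)"
    using F unfolding blocks_def by auto
  have ik: "i \<noteq> k" using ne i k by auto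
  have mE: "Min E = i" and mF: "Min F = k" using Min_B i k by auto
  show "nearly_disjoint E F"
    unfolding nearly_disjoint_def mE mF
  proof
    fix m assume m: "m \<in> E \<inter> F"
    show "m = i \<and> 1 < card E \<and> m \<noteq> k \<or> m = k \<and> 1 < card F \<and> m \<noteq> i"
    proof (cases "m = i")
      case True
      then have "m \<in> succs A k" using m k ik by auto
      then have "(k, i) \<in> A" using True by (simp add: succs_def)
      then have "i \<in> snd ` A" by force
      then have "succs A i \<noteq> {}" using i(2) by simp
      then show ?thesis using card_B True ik i(3) by simp
    next
      case False
      show ?thesis
      proof (cases "m = k")
        case True
        then have "m \<in> succs A i" using m i ik by auto
        then have "(i, k) \<in> A" using True by (simp add: succs_def)
        then have "k \<in> snd ` A" by force
        then have "succs A k \<noteq> {}" using k(2) by simp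
        then show ?thesis using card_B True ik k(3) by simp
      next
        case False': False
        then have "(i, m) \<in> A" "(k, m) \<in> A" using m i k False by (auto simp: succs_def)
        then have "(i, m) = (k, m)" using injA inj_onD[of snd A "(i, m)" "(k, m)"] by simp
        then have "i = k" by simp
        then show ?thesis using ik by simp
      qed
    qed
  qed
qed

lemma arcs_blocks: "arcs (blocks n A) = A"
proof (intro equalityI subsetI)
  fix p assume "p \<in> arcs (blocks n A)"
  then obtain E where E: "E \<in> blocks n A" "fst p = Min E" "snd p \<in> E" "snd p \<noteq> Min E"
    using arcs_iff[OF blocks_lp, of p] by blast
  then obtain i where i: "E = insert i (succs A i)" unfolding blocks_def by auto
  then have "fst p = i" using E Min_B by simp
  then have "snd p \<in> succs A i" using E i by auto
  then show "p \<in> A" using \<open>fst p = i\<close> by (cases p) (simp add: succs_def)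
next
  fix p assume p: "p \<in> A"
  obtain i j where ij: "p = (i, j)" by (cases p)
  have "i \<in> {1..n}" using bA p ij by auto
  moreover have "j \<in> succs A i" using p ij by (simp add: succs_def)
  ultimately have B: "insert i (succs A i) \<in> blocks n A" unfolding blocks_def by blast
  have "i < j" using ltA p ij by auto
  then have "\<exists>E\<in>blocks n A. fst p = Min E \<and> snd p \<in> E \<and> snd p \<noteq> Min E"
    using B Min_B[of i] \<open>j \<in> succs A i\<close> ij by (intro bexI[OF _ B]) auto
  then show "p \<in> arcs (blocks n A)" using arcs_iff[OF blocks_lp, of p] by blast
qed

end

lemma LP_arcs:
  assumes S: "set_mset S \<subseteq> {1..n}" and T: "T \<subseteq> {1..n}"
  shows "arcs ` LP n S T = AS S T" "inj_on arcs (LP n S T)"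
proof -
  have fT: "finite T" using T finite_subset by blast
  show "inj_on arcs (LP n S T)"
  proof (rule inj_onI)
    fix p q assume "p \<in> LP n S T" "q \<in> LP n S T" "arcs p = arcs q"
    then show "p = q" using blocks_arcs unfolding LP_def by (metis mem_Collect_eq)
  qed
  show "arcs ` LP n S T = AS S T"
  proof (intro equalityI subsetI)
    fix A assume "A \<in> arcs ` LP n S T"
    then obtain p where p: "p \<in> LP n S T" "A = arcs p" by blast
    have lp: "linked_partition n p" and l: "lefts p = S" and r: "rights p = mset_set T"
      using p unfolding LP_def by auto
    have v: "finite A" "\<forall>e\<in>A. fst e < snd e" "inj_on snd A" using arcs_valid[OF lp] p(2) by auto
    have "mset_set (snd ` A) = mset_set T"
      using r image_mset_mset_set[OF v(3)] p(2) unfolding rights_def by simp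
    then have "snd ` A = T" using v(1) fT by simp
    then show "A \<in> AS S T" using v l p(2) unfolding AS_def lefts_def by simp
  next
    fix A assume A: "A \<in> AS S T"
    have v: "finite A" "\<forall>e\<in>A. fst e < snd e" "inj_on snd A" "image_mset fst (mset_set A) = S" "snd ` A = T"
      using A unfolding AS_def by auto
    have bA: "A \<subseteq> {1..n} \<times> {1..n}"
      using AS_mem[OF A] S T by fastforce
    have lp: "linked_partition n (blocks n A)" by (rule blocks_lp[OF v(1-3) bA])
    have ar: "arcs (blocks n A) = A" by (rule arcs_blocks[OF v(1-3) bA])
    have "rights (blocks n A) = mset_set T"
      unfolding rights_def ar using image_mset_mset_set[OF v(3)] v(5) by simp
    moreover have "lefts (blocks n A) = S" unfolding lefts_def ar using v(4) .
    ultimately have "blocks n A \<in> LP n S T" using lp unfolding LP_def by simp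
    then show "A \<in> arcs ` LP n S T" using ar by force
  qed
qed

theorem theorem3p6:
  fixes n :: nat and S :: "nat multiset" and T :: "nat set" and x y :: real
  assumes "n \<ge> 1"
    and "set_mset S \<subseteq> {1..n}"
    and "T \<subseteq> {1..n}"
    and "card T = size S"
    and "y \<noteq> 0"
  defines "h \<equiv> (\<lambda>a. int (card {j \<in> T. j > a}) - int (size (filter_mset (\<lambda>j. j > a) S)))"
  shows "(\<Sum>\<pi>\<in>LP n S T. x ^ cr2 \<pi> * y ^ ne2 \<pi>) = (\<Sum>\<pi>\<in>LP n S T. x ^ ne2 \<pi> * y ^ cr2 \<pi>)
    \<and> (\<Sum>\<pi>\<in>LP n S T. x ^ ne2 \<pi> * y ^ cr2 \<pi>) =
      (\<Prod>a\<in>set_mset S.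
         y powi (int (count S a) * h a - int (count S a) ^ 2) *
         (if h a < 0 then 0 else poly (qbinom (nat (h a)) (count S a)) (x / y)))"
proof -
  have fT: "finite T" using assms(3) finite_subset by blast
  have conv: "(\<Sum>\<pi>\<in>LP n S T. Wt b x y (arcs \<pi>)) = (\<Sum>A\<in>AS S T. Wt b x y A)" for b
    using sum.reindex[OF LP_arcs(2)[OF assms(2,3)], of "Wt b x y"] LP_arcs(1)[OF assms(2,3)]
    by (simp add: comp_def)
  have prod: "(\<Prod>a\<in>set_mset S. Qf x y S T a) =
      (\<Prod>a\<in>set_mset S.
         y powi (int (count S a) * h a - int (count S a) ^ 2) *
         (if h a < 0 then 0 else poly (qbinom (nat (h a)) (count S a)) (x / y)))"
    unfolding Qf_def hh_def h_def by simp
  have m: "(\<Sum>\<pi>\<in>LP n S T. Wt b x y (arcs \<pi>)) = (\<Prod>a\<in>set_mset S. Qf x y S T a)" for b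
    unfolding conv by (rule main_AS[OF fT assms(4,5)])
  have t: "(\<Sum>\<pi>\<in>LP n S T. x ^ cr2 \<pi> * y ^ ne2 \<pi>) = (\<Sum>\<pi>\<in>LP n S T. Wt True x y (arcs \<pi>))"
    by (simp add: Wt_def cr2_def ne2_def crA_def neA_def)
  have f: "(\<Sum>\<pi>\<in>LP n S T. x ^ ne2 \<pi> * y ^ cr2 \<pi>) = (\<Sum>\<pi>\<in>LP n S T. Wt False x y (arcs \<pi>))"
    by (simp add: Wt_def cr2_def ne2_def crA_def neA_def)
  show ?thesis unfolding t f m prod by simp
qed

end
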